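(* Let $\alpha\in(0,1)$ and, for a map $\phi$ on $\mathbb T$ and $\Omega\in\mathbb R$, let $$G(\Omega,\phi)(w)=\operatorname{Im}\left\{\left(\Omega\phi(w)-C_\alpha\frac{1}{2\pi i}\int_{\mathbb T}\frac{\phi'(\tau)d\tau}{|\phi(w)-\phi(\tau)|^\alpha}\right)\overline w\,\overline{\phi'(w)}\right\},\quad w\in\mathbb T,$$ with $C_\alpha=\frac{\Gamma(\alpha/2)}{2^{1-\alpha}\Gamma(\frac{2-\alpha}2)}$. Then: (1) (discs) $G(\Omega,\mathrm{Id})\equiv0$ on $\mathbb T$ for every $\Omega\in\mathbb R$, i.e. discs are rotating patches with any angular velocity; (2) (ellipses) for every $Q\in(0,1)$ and $\phi_Q(w)=w+Q\overline w$ (the exterior conformal parametrization of an ellipse with semi-axes $a>b$, $Q=\frac{a-b}{a+b}$), there is no $\Omega\in\mathbb R$ with $G(\Omega,\phi_Q)\equiv0$ on $\mathbb T$; i.e. non-circular ellipses are not rotating patches of the generalized SQG equation.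
   Context: $\mathbb T$ is the unit circle, $\int_{\mathbb T}\dots d\tau$ the complex line integral, $\phi'=d\phi/dw$. The equation $G(\Omega,\phi)=0$ on $\mathbb T$ characterizes, for $\phi$ the exterior conformal map of a domain $D$ centered at $0$, that $\mathbf 1_D$ is a rotating patch with angular velocity $\Omega$ for the generalized SQG equation $\partial_t\theta+u\cdot\nabla\theta=0$, $u=-\nabla^\perp(-\Delta)^{-1+\frac\alpha2}\theta$. *)

theory Defs
  imports "HOL-Analysis.Analysis"
begin

definition C_alpha :: "real \<Rightarrow> real" where
  "C_alpha \<alpha> = Gamma (\<alpha> / 2) / (2 powr (1 - \<alpha>) * Gamma ((2 - \<alpha>) / 2))"

definition circle_integral :: "(complex \<Rightarrow> complex) \<Rightarrow> complex" where
  "circle_integral f = integral {0..2*pi} (\<lambda>t. f (cis t) * (\<i> * cis t))"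

definition G :: "real \<Rightarrow> real \<Rightarrow> (complex \<Rightarrow> complex) \<Rightarrow> complex \<Rightarrow> real" where
  "G \<alpha> \<Omega> \<phi> w =
     Im ((of_real \<Omega> * \<phi> w
          - of_real (C_alpha \<alpha>) * (1 / (2 * of_real pi * \<i>))
            * circle_integral (\<lambda>\<tau>. deriv \<phi> \<tau> / of_real (cmod (\<phi> w - \<phi> \<tau>) powr \<alpha>)))
         * cnj w * cnj (deriv \<phi> w))"

end

theory Submission
  imports Defs
begin


lemma periodic_shift_aux:
  fixes h :: "real \<Rightarrow> 'b::euclidean_space"
  assumes per: "\<And>x. h (x + 2*pi) = h x"
    and ab: "a \<le> b" "b \<le> a + 2*pi"
    and int: "h integrable_on {a..a+2*pi}"
  shows "h integrable_on {b..b+2*pi} \<and> integral {b..b+2*pi} h = integral {a..a+2*pi} h"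
proof -
  have e: "(\<lambda>x. h (x + 2*pi)) = h" using per by auto
  have i2: "h integrable_on {a+2*pi..a+4*pi}"
    using integrable_shift_real_ivl_iff[of h "2*pi" "a+2*pi" "a+4*pi"] int by (simp add: e add.commute)
  have i4: "h integrable_on {a..a+4*pi}"
    by (rule Henstock_Kurzweil_Integration.integrable_combine[OF _ _ int i2]) (use pi_gt_zero in auto)
  have ib: "h integrable_on {b..b+2*pi}"
    by (rule integrable_on_subinterval[OF i4]) (use ab in auto)
  have s1: "integral {b..a+2*pi} h + integral {a+2*pi..b+2*pi} h = integral {b..b+2*pi} h"
    by (rule Henstock_Kurzweil_Integration.integral_combine) (use ab ib in auto)
  have "integral {(a+2*pi)-2*pi..(b+2*pi)-2*pi} (\<lambda>x. h (x + 2*pi)) = integral {a+2*pi..b+2*pi} h"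
    by (rule integral_shift_real_ivl)
  hence s2: "integral {a..b} h = integral {a+2*pi..b+2*pi} h" by (simp add: e)
  have s3: "integral {a..b} h + integral {b..a+2*pi} h = integral {a..a+2*pi} h"
    by (rule Henstock_Kurzweil_Integration.integral_combine) (use ab int in auto)
  have "integral {b..b+2*pi} h = integral {a..a+2*pi} h" using s1 s2 s3 by (metis add.commute)
  then show ?thesis using ib by simp
qed

lemma periodic_shift:
  fixes h :: "real \<Rightarrow> 'b::euclidean_space"
  assumes per: "\<And>x. h (x + 2*pi) = h x"
    and ab: "\<bar>a - b\<bar> \<le> 2*pi"
    and int: "h integrable_on {a..a+2*pi}"
  shows "h integrable_on {b..b+2*pi} \<and> integral {b..b+2*pi} h = integral {a..a+2*pi} h"
proof (cases "a \<le> b")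
  case True
  then show ?thesis using periodic_shift_aux[of h, OF per True _ int] ab by simp
next
  case False
  have e: "(\<lambda>x. h (x + 2*pi)) = h" using per by auto
  have i0: "h integrable_on {a-2*pi..a}"
    using integrable_shift_real_ivl_iff[of h "2*pi" "a" "a+2*pi"] int by (simp add: e)
  have j0: "integral {a-2*pi..a} h = integral {a..a+2*pi} h"
    using integral_shift_real_ivl[of "a" "2*pi" "a+2*pi" h] by (simp add: e)
  have "h integrable_on {b..b+2*pi} \<and> integral {b..b+2*pi} h = integral {a-2*pi..a-2*pi+2*pi} h"
    by (rule periodic_shift_aux[of h, OF per]) (use False ab i0 in auto)
  then show ?thesis using j0 by simp
qed

lemma periodic_shift0:
  fixes h :: "real \<Rightarrow> 'b::euclidean_space"
  assumes per: "\<And>x. h (x + 2*pi) = h x"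
    and c: "\<bar>c\<bar> \<le> 2*pi"
    and int: "h integrable_on {0..2*pi}"
  shows "(\<lambda>x. h (x + c)) integrable_on {0..2*pi} \<and> integral {0..2*pi} (\<lambda>x. h (x + c)) = integral {0..2*pi} h"
proof -
  have "h integrable_on {c..c+2*pi} \<and> integral {c..c+2*pi} h = integral {0..0+2*pi} h"
    by (rule periodic_shift[of h, OF per]) (use c int in auto)
  moreover have "(\<lambda>x. h (x + c)) integrable_on {c-c..(c+2*pi)-c} \<longleftrightarrow> h integrable_on {c..c+2*pi}"
    by (rule integrable_shift_real_ivl_iff)
  moreover have "integral {c-c..(c+2*pi)-c} (\<lambda>x. h (x + c)) = integral {c..c+2*pi} h"
    by (rule integral_shift_real_ivl)
  ultimately show ?thesis by simp
qed

lemma periodic_reflect0: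
  fixes h :: "real \<Rightarrow> 'b::euclidean_space"
  assumes per: "\<And>x. h (x + 2*pi) = h x"
    and int: "h integrable_on {0..2*pi}"
  shows "(\<lambda>x. h (- x)) integrable_on {0..2*pi} \<and> integral {0..2*pi} (\<lambda>x. h (- x)) = integral {0..2*pi} h"
proof -
  have "h integrable_on {-2*pi..-2*pi+2*pi} \<and> integral {-2*pi..-2*pi+2*pi} h = integral {0..0+2*pi} h"
    by (rule periodic_shift[of h, OF per]) (use int in auto)
  hence 1: "h integrable_on {-(2*pi)..-0} \<and> integral {-(2*pi)..-0} h = integral {0..2*pi} h" by simp
  have 2: "integral {-(2*pi)..-0} h = integral {0..2*pi} (\<lambda>x. h (- x))"
    using Henstock_Kurzweil_Integration.integral_reflect_real[of "2*pi" 0 "\<lambda>x. h (-x)"] by simp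
  have 3: "(\<lambda>x. h (- x)) integrable_on {0..2*pi}"
    using 1 Henstock_Kurzweil_Integration.integrable_reflect_real[of h 0 "-2*pi"] by simp
  show ?thesis using 1 2 3 by simp
qed



lemma Im_integral:
  fixes f :: "real \<Rightarrow> complex"
  assumes "f integrable_on S"
  shows "Im (integral S f) = integral S (\<lambda>x. Im (f x))"
  using has_integral_Im[OF integrable_integral[OF assms]] by (simp add: integral_unique)

lemma Im_integrable:
  fixes f :: "real \<Rightarrow> complex"
  assumes "f integrable_on S"
  shows "(\<lambda>x. Im (f x)) integrable_on S"
  using has_integral_Im[OF integrable_integral[OF assms]] by blast

definition kd :: "real \<Rightarrow> real \<Rightarrow> real" where
  "kd \<alpha> s = sin s / (cmod (1 - cis s) powr \<alpha>)"

lemma kd_per: "kd \<alpha> (s + 2*pi) = kd \<alpha> s"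
  by (simp add: kd_def cis.ctr)

lemma kd_odd: "kd \<alpha> (- s) = - kd \<alpha> s"
proof -
  have "cmod (1 - cis (-s)) = cmod (1 - cis s)"
  proof -
    have "1 - cis (-s) = cnj (1 - cis s)" by (simp add: cis_cnj)
    thus ?thesis by (metis complex_mod_cnj)
  qed
  thus ?thesis by (simp add: kd_def)
qed

lemma kd_integral_zero:
  assumes "kd \<alpha> integrable_on {0..2*pi}"
  shows "integral {0..2*pi} (kd \<alpha>) = 0"
proof -
  have "integral {0..2*pi} (\<lambda>x. kd \<alpha> (- x)) = integral {0..2*pi} (kd \<alpha>)"
    using periodic_reflect0[of "kd \<alpha>", OF kd_per assms] by simp
  hence "- integral {0..2*pi} (kd \<alpha>) = integral {0..2*pi} (kd \<alpha>)"
    by (simp add: kd_odd)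
  thus ?thesis by simp
qed

lemma part1:
  fixes \<alpha> \<Omega> :: real and w :: complex
  assumes w: "cmod w = 1"
  shows "G \<alpha> \<Omega> id w = 0"
proof -
  define ths where "ths = Arg w"
  have wn: "w \<noteq> 0" using w by auto
  have wc: "w = cis ths" unfolding ths_def using cis_Arg[OF wn] by (simp add: sgn_div_norm w)
  have thb: "\<bar>ths\<bar> \<le> 2*pi" unfolding ths_def using Arg_bounded[of w] by auto
  define g where "g = (\<lambda>t. 1 / complex_of_real (cmod (w - cis t) powr \<alpha>) * (\<i> * cis t) * (cnj w / (2 * of_real pi * \<i>)))"
  have g1: "integral {0..2*pi} g = circle_integral (\<lambda>\<tau>. 1 / complex_of_real (cmod (w - \<tau>) powr \<alpha>)) * (cnj w / (2 * of_real pi * \<i>))"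
    unfolding g_def circle_integral_def by (rule integral_mult_left)
  have gI: "(1 / (2 * of_real pi * \<i>)) * circle_integral (\<lambda>\<tau>. 1 / complex_of_real (cmod (w - \<tau>) powr \<alpha>)) * cnj w
      = integral {0..2*pi} g"
    unfolding g1 by (simp add: field_simps)
  have Img: "Im (g t) = kd \<alpha> (t - ths) / (2*pi)" for t
  proof -
    have n: "cmod (w - cis t) = cmod (1 - cis (t - ths))"
    proof -
      have "w - cis t = cis ths * (1 - cis (t - ths))" by (simp add: wc algebra_simps cis_mult)
      thus ?thesis by (simp add: norm_mult)
    qed
    have "g t = complex_of_real (1 / (2*pi* (cmod (w - cis t) powr \<alpha>))) * (cis t * cis (- ths))"
      unfolding g_def wc by (simp add: field_simps cis_cnj)
    also have "\<dots> = complex_of_real (1 / (2*pi* (cmod (w - cis t) powr \<alpha>))) * cis (t - ths)"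
      by (simp add: cis_mult)
    finally show ?thesis by (simp add: kd_def n)
  qed
  have Im0: "Im (integral {0..2*pi} g) = 0"
  proof (cases "g integrable_on {0..2*pi}")
    case False thus ?thesis by (simp add: not_integrable_integral)
  next
    case True
    have i1: "(\<lambda>t. kd \<alpha> (t - ths) / (2*pi)) integrable_on {0..2*pi}"
      using Im_integrable[OF True] by (simp add: Img)
    have i2: "(\<lambda>t. kd \<alpha> (t - ths)) integrable_on {0..2*pi}"
      using integrable_on_mult_left[OF i1, of "2*pi"] by simp
    have per: "kd \<alpha> (x - ths + 2*pi) = kd \<alpha> (x - ths)" for x
      using kd_per[of \<alpha> "x - ths"] by (simp add: algebra_simps)
    have "(\<lambda>x. kd \<alpha> (x + ths - ths)) integrable_on {0..2*pi} \<and>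
          integral {0..2*pi} (\<lambda>x. kd \<alpha> (x + ths - ths)) = integral {0..2*pi} (\<lambda>t. kd \<alpha> (t - ths))"
      using periodic_shift0[of "\<lambda>t. kd \<alpha> (t - ths)", OF _ thb i2] per by (simp add: algebra_simps)
    hence "kd \<alpha> integrable_on {0..2*pi} \<and> integral {0..2*pi} (kd \<alpha>) = integral {0..2*pi} (\<lambda>t. kd \<alpha> (t - ths))"
      by simp
    hence "integral {0..2*pi} (\<lambda>t. kd \<alpha> (t - ths)) = 0" using kd_integral_zero by metis
    thus ?thesis using Im_integral[OF True] by (simp add: Img)
  qed
  have z1: "Im (complex_of_real \<Omega> * w * cnj w) = 0"
    by (simp add: w complex_mult_cnj cmod_def)
  have eqG: "G \<alpha> \<Omega> id w = Im (complex_of_real \<Omega> * w * cnj w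
     - complex_of_real (C_alpha \<alpha>) * ((1 / (2 * of_real pi * \<i>)) * circle_integral (\<lambda>\<tau>. 1 / complex_of_real (cmod (w - \<tau>) powr \<alpha>)) * cnj w))"
    unfolding G_def by (simp add: algebra_simps)
  have key: "\<And>c a Z. Im (a - complex_of_real c * Z) = Im a - c * Im Z" by simp
  show ?thesis unfolding eqG key z1 gI Im0 by simp
qed



lemma sin_ge_x_cos:
  assumes "0 \<le> x" "x \<le> pi"
  shows "x * cos x \<le> sin x"
proof -
  have "(\<lambda>x. sin x - x * cos x) 0 \<le> (\<lambda>x. sin x - x * cos x) x"
  proof (rule DERIV_nonneg_imp_nondecreasing[OF assms(1)])
    fix y assume y: "0 \<le> y" "y \<le> x"
    have "DERIV (\<lambda>x. sin x - x * cos x) y :> cos y - (cos y + y * (- sin y))"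
      by (auto intro!: derivative_eq_intros)
    moreover have "cos y - (cos y + y * (- sin y)) \<ge> 0"
      using y assms sin_ge_zero[of y] by simp
    ultimately show "\<exists>d. DERIV (\<lambda>x. sin x - x * cos x) y :> d \<and> d \<ge> 0" by blast
  qed
  thus ?thesis by simp
qed

lemma sin_ge_quarter:
  assumes "0 \<le> x" "x \<le> pi/2"
  shows "x / 4 \<le> sin x"
proof (cases "x \<le> pi/3")
  case True
  have "cos (pi/3) \<le> cos x" using True assms by (intro cos_monotone_0_pi_le) auto
  hence "1/2 \<le> cos x" by (simp add: cos_60)
  hence "x * (1/2) \<le> x * cos x" using assms by (intro mult_left_mono) auto
  thus ?thesis using sin_ge_x_cos[of x] assms by simp
next
  case False
  have "sin (pi/6) \<le> sin x" using False assms by (intro sin_monotone_2pi_le) auto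
  hence "1/2 \<le> sin x" by (simp add: sin_30)
  moreover have "x/4 \<le> 1/2" using assms pi_less_4 by simp
  ultimately show ?thesis by simp
qed

lemma cmod_one_minus_cis_sq: "(cmod (1 - cis s))^2 = 2 - 2 * cos s"
proof -
  have "(cmod (1 - cis s))^2 = (1 - cos s)^2 + (sin s)^2"
    by (simp add: cmod_power2)
  also have "\<dots> = 2 - 2 * cos s" by (simp add: power2_eq_square algebra_simps sin_squared_eq)
  finally show ?thesis .
qed

lemma cmod_one_minus_cis_ge:
  assumes "\<bar>s\<bar> \<le> pi"
  shows "\<bar>s\<bar> / 4 \<le> cmod (1 - cis s)"
proof -
  have cs: "cos s = 1 - 2 * (sin (s/2))^2"
    using cos_double_sin[of "s/2"] by simp
  have "(cmod (1 - cis s))^2 = (2 * \<bar>sin (s/2)\<bar>)^2"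
    by (simp add: cmod_one_minus_cis_sq cs power_mult_distrib)
  hence e: "cmod (1 - cis s) = 2 * \<bar>sin (s/2)\<bar>"
    by (rule power2_eq_imp_eq) auto
  have "\<bar>s/2\<bar> / 4 \<le> sin \<bar>s/2\<bar>" using assms by (intro sin_ge_quarter) auto
  moreover have "sin \<bar>s/2\<bar> = \<bar>sin (s/2)\<bar>"
    by (cases "s \<ge> 0") (use assms sin_ge_zero[of "\<bar>s/2\<bar>"] in auto)
  ultimately show ?thesis using e by simp
qed



definition Pp :: "real \<Rightarrow> real \<Rightarrow> real" where "Pp a c = (2 - 2*c) powr (a/2)"
definition Bp :: "real \<Rightarrow> real \<Rightarrow> real \<Rightarrow> real" where "Bp a Q y = (1 - 2*Q*y + Q^2) powr (a/2)"

lemma phi_cis: "cis t + complex_of_real Q / cis t = cis t + complex_of_real Q * cis (- t)"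
  by (simp add: divide_inverse)

lemma deriv_phi:
  assumes "z \<noteq> 0"
  shows "deriv (\<lambda>z. z + complex_of_real Q / z) z = 1 - complex_of_real Q / z^2"
proof -
  have "((\<lambda>z. z + complex_of_real Q / z) has_field_derivative (1 - complex_of_real Q / z^2)) (at z)"
    using assms by (auto intro!: derivative_eq_intros simp: power2_eq_square field_simps)
  thus ?thesis by (rule DERIV_imp_deriv)
qed

lemma deriv_phi_cis:
  "deriv (\<lambda>z. z + complex_of_real Q / z) (cis t) = 1 - complex_of_real Q * cis (- 2 * t)"
proof -
  have "(cis t)^2 = cis (2*t)" using Complex.DeMoivre[of t 2] by simp
  hence "complex_of_real Q / (cis t)^2 = complex_of_real Q * cis (-2*t)"
    by (simp add: divide_inverse)
  thus ?thesis by (simp add: deriv_phi)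
qed

lemma cmod_cis_diff: "cmod (cis a - cis t) = cmod (1 - cis (t - a))"
proof -
  have "cis a - cis t = cis a * (1 - cis (t - a))" by (simp add: algebra_simps cis_mult)
  thus ?thesis by (simp add: norm_mult)
qed

lemma cmod_one_minus_Qcis_sq: "(cmod (1 - complex_of_real Q * cis v))^2 = 1 - 2*Q*cos v + Q^2"
proof -
  have "(cmod (1 - complex_of_real Q * cis v))^2 = (1 - Q * cos v)^2 + (Q * sin v)^2"
    by (simp add: cmod_power2)
  also have "\<dots> = 1 - 2*Q*cos v + Q^2"
    using sin_cos_squared_add[of v] by algebra
  finally show ?thesis .
qed

lemma phi_diff:
  "(cis a + complex_of_real Q * cis (- a)) - (cis t + complex_of_real Q * cis (- t))
     = (cis a - cis t) * (1 - complex_of_real Q * cis (- (a + t)))"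
  by (simp add: algebra_simps cis_mult)

lemma sqrt_powr: "0 \<le> x \<Longrightarrow> sqrt x powr a = x powr (a/2)"
  by (simp add: powr_half_sqrt[symmetric] powr_powr)

lemma dd_powr:
  "cmod ((cis a + complex_of_real Q * cis (- a)) - (cis t + complex_of_real Q * cis (- t))) powr \<alpha>
     = Pp \<alpha> (cos (t - a)) * Bp \<alpha> Q (cos (t + a))"
proof -
  have n1: "cmod (cis a - cis t) = sqrt (2 - 2 * cos (t - a))"
    using cmod_one_minus_cis_sq[of "t - a"] by (simp add: cmod_cis_diff real_sqrt_unique)
  have n2: "cmod (1 - complex_of_real Q * cis (- (a + t))) = sqrt (1 - 2*Q*cos (t + a) + Q^2)"
  proof -
    have "cos (- (a + t)) = cos (t + a)" using cos_minus[of "a+t"] by (simp add: add.commute)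
    thus ?thesis using cmod_one_minus_Qcis_sq[of Q "- (a + t)"] by (metis norm_ge_zero real_sqrt_unique)
  qed
  have p1: "0 \<le> 2 - 2 * cos (t - a)" by simp
  have p2: "0 \<le> 1 - 2*Q*cos (t + a) + Q^2"
    using cmod_one_minus_Qcis_sq[of Q "t + a"] by (metis zero_le_power2)
  show ?thesis
    unfolding phi_diff norm_mult n1 n2 Pp_def Bp_def
    using p1 p2 by (simp add: powr_mult sqrt_powr)
qed



definition uu :: "real \<Rightarrow> real \<Rightarrow> real \<Rightarrow> real \<Rightarrow> real" where
  "uu a Q s v = sin s / (Pp a (cos s) * Bp a Q (cos v))"

lemma ImN:
  "Im ((cis t - complex_of_real Q * cis (- t)) * (cis (- th) - complex_of_real Q * cis th))
     = (1 - Q^2) * sin (t - th)"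
  by (simp add: sin_diff algebra_simps power2_eq_square)

definition FF :: "real \<Rightarrow> real \<Rightarrow> real \<Rightarrow> real \<Rightarrow> complex" where
  "FF a Q th t = (1 - complex_of_real Q * cis (- 2 * t)) / complex_of_real (Pp a (cos (t - th)) * Bp a Q (cos (t + th))) * (\<i> * cis t)"

definition Yc :: "real \<Rightarrow> real \<Rightarrow> complex" where
  "Yc Q th = cnj (cis th) * cnj (1 - complex_of_real Q * cis (- 2 * th)) / (2 * complex_of_real pi * \<i>)"

lemma FF_Yc:
  "FF a Q th t * Yc Q th = ((cis t - complex_of_real Q * cis (- t)) * (cis (- th) - complex_of_real Q * cis th))
      / complex_of_real (2 * pi * (Pp a (cos (t - th)) * Bp a Q (cos (t + th))))"
proof (cases "Pp a (cos (t - th)) * Bp a Q (cos (t + th)) = 0")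
  case True
  then show ?thesis unfolding FF_def True by simp
next
  case False
  have c1: "(1 - complex_of_real Q * cis (- 2 * t)) * cis t = cis t - complex_of_real Q * cis (- t)"
    by (simp add: algebra_simps cis_mult)
  have c2: "cis (- th) * (1 - complex_of_real Q * cis (2 * th)) = cis (- th) - complex_of_real Q * cis th"
    by (simp add: algebra_simps cis_mult)
  have cc: "cnj (1 - complex_of_real Q * cis (- 2 * th)) = 1 - complex_of_real Q * cis (2 * th)"
    by (simp add: cis_cnj)
  define d where "d = Pp a (cos (t - th)) * Bp a Q (cos (t + th))"
  have dn: "complex_of_real d \<noteq> 0" using False unfolding d_def by simp
  have "FF a Q th t * Yc Q th = (\<i> * ((1 - complex_of_real Q * cis (- 2 * t)) * cis t) / complex_of_real d)
      * ((cis (- th) * (1 - complex_of_real Q * cis (2 * th))) / (2 * complex_of_real pi * \<i>))"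
    unfolding FF_def Yc_def cc d_def[symmetric] by (simp add: cis_cnj algebra_simps)
  also have "\<dots> = (\<i> * (cis t - complex_of_real Q * cis (- t)) / complex_of_real d)
      * ((cis (- th) - complex_of_real Q * cis th) / (2 * complex_of_real pi * \<i>))"
    unfolding c1 c2 ..
  also have "\<dots> = ((cis t - complex_of_real Q * cis (- t)) * (cis (- th) - complex_of_real Q * cis th))
      / complex_of_real (2 * pi * d)"
    using dn by (simp add: field_simps)
  finally show ?thesis unfolding d_def .
qed

lemma Im_FF:
  "Im (FF a Q th t * Yc Q th) = (1 - Q^2) / (2*pi) * uu a Q (t - th) (t + th)"
  unfolding FF_Yc Im_divide_of_real ImN uu_def by simp



lemma circ_eq:
  "circle_integral (\<lambda>\<tau>. deriv (\<lambda>z. z + complex_of_real Q / z) \<tau> /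
        complex_of_real (cmod ((cis th + complex_of_real Q / cis th) - (\<tau> + complex_of_real Q / \<tau>)) powr \<alpha>))
   = integral {0..2*pi} (FF \<alpha> Q th)"
  unfolding circle_integral_def
proof (rule integral_cong)
  fix t
  show "deriv (\<lambda>z. z + complex_of_real Q / z) (cis t) /
        complex_of_real (cmod ((cis th + complex_of_real Q / cis th) - (cis t + complex_of_real Q / cis t)) powr \<alpha>)
        * (\<i> * cis t) = FF \<alpha> Q th t"
    unfolding phi_cis deriv_phi_cis dd_powr FF_def ..
qed

lemma ImX: "Im ((cis th + complex_of_real Q * cis (- th)) * cnj (cis th) * cnj (1 - complex_of_real Q * cis (- 2 * th)))
   = - 2 * Q * sin (2 * th)"
proof -
  have "(cis th + complex_of_real Q * cis (- th)) * cnj (cis th) * cnj (1 - complex_of_real Q * cis (- 2 * th))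
      = 1 - complex_of_real Q * cis (2*th) + complex_of_real Q * cis (- 2 * th) - complex_of_real (Q^2)"
    by (simp add: cis_cnj algebra_simps cis_mult power2_eq_square)
  thus ?thesis by simp
qed

lemma G_formula:
  "G \<alpha> \<Omega> (\<lambda>z. z + complex_of_real Q / z) (cis th)
     = - 2 * Q * \<Omega> * sin (2*th) - C_alpha \<alpha> * Im (integral {0..2*pi} (\<lambda>t. FF \<alpha> Q th t * Yc Q th))"
proof -
  define X where "X = (cis th + complex_of_real Q * cis (- th)) * cnj (cis th) * cnj (1 - complex_of_real Q * cis (- 2 * th))"
  define I where "I = integral {0..2*pi} (FF \<alpha> Q th)"
  have i1: "integral {0..2*pi} (\<lambda>t. FF \<alpha> Q th t * Yc Q th) = I * Yc Q th"
    unfolding I_def by (rule integral_mult_left)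
  have "G \<alpha> \<Omega> (\<lambda>z. z + complex_of_real Q / z) (cis th)
      = Im (complex_of_real \<Omega> * X - complex_of_real (C_alpha \<alpha>) * (I * Yc Q th))"
    unfolding G_def circ_eq I_def[symmetric] X_def Yc_def
    by (simp add: phi_cis deriv_phi_cis algebra_simps)
  also have "\<dots> = \<Omega> * Im X - C_alpha \<alpha> * Im (I * Yc Q th)" by simp
  also have "Im X = - 2 * Q * sin (2 * th)" unfolding X_def by (rule ImX)
  finally show ?thesis unfolding i1 by simp
qed



lemma abs_powr_integrable:
  assumes "0 < \<alpha>" "\<alpha> < 1"
  shows "(\<lambda>x. \<bar>x\<bar> powr (- \<alpha>)) integrable_on {-pi..pi}"
proof -
  have p: "(\<lambda>x. x powr (- \<alpha>)) integrable_on {0..pi}"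
    using assms by (intro integrable_on_powr_from_0) auto
  have i1: "(\<lambda>x. \<bar>x\<bar> powr (- \<alpha>)) integrable_on {0..pi}"
    by (rule integrable_eq[OF p]) auto
  have "(\<lambda>x. \<bar>- x\<bar> powr (- \<alpha>)) integrable_on {-pi..-0}"
    using i1 Henstock_Kurzweil_Integration.integrable_reflect_real[of "\<lambda>x. \<bar>x\<bar> powr (- \<alpha>)" pi 0] by simp
  hence i2: "(\<lambda>x. \<bar>x\<bar> powr (- \<alpha>)) integrable_on {-pi..0}" by simp
  show ?thesis
    by (rule Henstock_Kurzweil_Integration.integrable_combine[OF _ _ i2 i1]) auto
qed

lemma cmod_one_minus_Q_ge:
  assumes "0 \<le> Q"
  shows "1 - Q \<le> cmod (1 - complex_of_real Q * cis v)"
proof -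
  have "cmod 1 - cmod (complex_of_real Q * cis v) \<le> cmod (1 - complex_of_real Q * cis v)"
    by (rule norm_triangle_ineq2)
  thus ?thesis using assms by (simp add: norm_mult)
qed

lemma FF_bound:
  assumes a: "0 < \<alpha>" and Q: "0 < Q" "Q < 1" and t: "\<bar>t - th\<bar> \<le> pi"
  shows "norm (FF \<alpha> Q th t) \<le> 2 * ((1 - Q)/4) powr (- \<alpha>) * \<bar>t - th\<bar> powr (- \<alpha>)"
proof (cases "t = th")
  case True
  have "cis (th - th) = 1" by simp
  hence "Pp \<alpha> (cos (t - th)) = 0" using True a by (simp add: Pp_def)
  thus ?thesis unfolding FF_def using True by simp
next
  case False
  define m where "m = (1 - Q)/4"
  have m: "0 < m" using Q by (simp add: m_def)
  define D where "D = Pp \<alpha> (cos (t - th)) * Bp \<alpha> Q (cos (t + th))"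
  have Deq: "D = (cmod (cis th - cis t) * cmod (1 - complex_of_real Q * cis (- (th + t)))) powr \<alpha>"
    unfolding D_def dd_powr[symmetric] phi_diff norm_mult ..
  have l1: "\<bar>t - th\<bar> / 4 \<le> cmod (cis th - cis t)"
    unfolding cmod_cis_diff using cmod_one_minus_cis_ge[OF t] .
  have l2: "1 - Q \<le> cmod (1 - complex_of_real Q * cis (- (th + t)))"
    using cmod_one_minus_Q_ge Q by auto
  have pos: "0 < \<bar>t - th\<bar>" using False by simp
  have "m * \<bar>t - th\<bar> \<le> cmod (cis th - cis t) * cmod (1 - complex_of_real Q * cis (- (th + t)))"
  proof -
    have "m * \<bar>t - th\<bar> = (\<bar>t - th\<bar> / 4) * (1 - Q)" by (simp add: m_def)
    also have "\<dots> \<le> cmod (cis th - cis t) * cmod (1 - complex_of_real Q * cis (- (th + t)))"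
      using l1 l2 Q by (intro mult_mono) auto
    finally show ?thesis .
  qed
  hence Dge: "(m * \<bar>t - th\<bar>) powr \<alpha> \<le> D"
    unfolding Deq using m pos a by (intro powr_mono2) auto
  have Dpos0: "0 < (m * \<bar>t - th\<bar>) powr \<alpha>" using m pos by simp
  have Dpos: "0 < D" using Dge Dpos0 by linarith
  have n1: "norm (1 - complex_of_real Q * cis (- 2 * t)) \<le> 2"
  proof -
    have "norm (1 - complex_of_real Q * cis (- 2 * t)) \<le> norm (1::complex) + norm (complex_of_real Q * cis (- 2 * t))"
      by (rule norm_triangle_ineq4)
    thus ?thesis using Q by (simp add: norm_mult)
  qed
  have "norm (FF \<alpha> Q th t) = norm (1 - complex_of_real Q * cis (- 2 * t)) / D"
    unfolding FF_def D_def[symmetric] using Dpos by (simp add: norm_mult norm_divide)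
  also have "\<dots> \<le> 2 / D" using n1 Dpos by (simp add: divide_right_mono)
  also have "\<dots> \<le> 2 / (m * \<bar>t - th\<bar>) powr \<alpha>"
    using Dge Dpos0 by (simp add: frac_le)
  also have "\<dots> = 2 * m powr (- \<alpha>) * \<bar>t - th\<bar> powr (- \<alpha>)"
    using m pos by (simp add: powr_mult powr_minus divide_inverse)
  finally show ?thesis unfolding m_def .
qed



lemma cis_per: "cis (x + 2*pi) = cis x"
  by (simp add: cis_mult[symmetric])

lemma FF_per: "FF \<alpha> Q th (t + 2*pi) = FF \<alpha> Q th t"
proof -
  have e1: "cos (t + 2*pi - th) = cos (t - th)" using cos_periodic[of "t - th"] by (simp add: algebra_simps)
  have e2: "cos (t + 2*pi + th) = cos (t + th)" using cos_periodic[of "t + th"] by (simp add: algebra_simps)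
  have e3: "cis (- 2 * (t + 2*pi)) = cis (- 2 * t)"
  proof -
    have "cis (- 2 * t) = cis ((- 2 * (t + 2*pi) + 2*pi) + 2*pi)" by (simp add: algebra_simps)
    also have "\<dots> = cis (- 2 * (t + 2*pi))" by (simp only: cis_per)
    finally show ?thesis ..
  qed
  show ?thesis unfolding FF_def e1 e2 e3 cis_per ..
qed

lemma Bp_base_pos:
  fixes Q v :: real
  assumes "0 < Q" "Q < 1"
  shows "0 < 1 - 2*Q*cos v + Q^2"
proof -
  have "(1 - Q)^2 \<le> (cmod (1 - complex_of_real Q * cis v))^2"
    using cmod_one_minus_Q_ge[of Q v] assms by (intro power_mono) auto
  moreover have "0 < (1 - Q)^2" using assms by simp
  ultimately show ?thesis unfolding cmod_one_minus_Qcis_sq by linarith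
qed

lemma FF_integrable:
  assumes a: "0 < \<alpha>" "\<alpha> < 1" and Q: "0 < Q" "Q < 1" and th: "0 \<le> th" "th \<le> pi"
  shows "FF \<alpha> Q th integrable_on {0..2*pi}"
proof -
  define S where "S = {th - pi..th + pi}"
  have Sl: "S \<in> sets lebesgue" unfolding S_def by simp
  have cA: "continuous_on S (\<lambda>t. 1 - complex_of_real Q * cis (- 2 * t))"
    by (intro continuous_intros)
  have cC: "continuous_on S (\<lambda>t. \<i> * cis t)"
    by (intro continuous_intros)
  have cP: "continuous_on S (\<lambda>t. Pp \<alpha> (cos (t - th)))"
    unfolding Pp_def using a by (intro continuous_on_powr') (auto intro!: continuous_intros)
  have cB: "continuous_on S (\<lambda>t. Bp \<alpha> Q (cos (t + th)))"
    unfolding Bp_def using Bp_base_pos[OF Q] a by (intro continuous_on_powr') (auto intro!: continuous_intros simp: less_imp_le)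
  have cD: "continuous_on S (\<lambda>t. complex_of_real (Pp \<alpha> (cos (t - th)) * Bp \<alpha> Q (cos (t + th))))"
    using cP cB by (intro continuous_intros)
  have meas: "FF \<alpha> Q th \<in> borel_measurable (lebesgue_on S)"
    unfolding FF_def
    by (intro borel_measurable_times borel_measurable_divide continuous_imp_measurable_on_sets_lebesgue[OF _ Sl] cA cC cD)
  define g where "g = (\<lambda>t. 2 * ((1 - Q)/4) powr (- \<alpha>) * \<bar>t - th\<bar> powr (- \<alpha>))"
  have g1: "(\<lambda>x. 2 * ((1 - Q)/4) powr (- \<alpha>) * \<bar>x\<bar> powr (- \<alpha>)) integrable_on {-pi..pi}"
    using integrable_on_mult_right[OF abs_powr_integrable[OF a]] by simp
  have "(\<lambda>x. g (x + th)) integrable_on {(th - pi) - th..(th + pi) - th}"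
    using g1 unfolding g_def by simp
  hence gi: "g integrable_on S" unfolding S_def by (rule integrable_shift_real_ivl_iff[THEN iffD1])
  have bnd: "\<And>t. t \<in> S \<Longrightarrow> norm (FF \<alpha> Q th t) \<le> g t"
    unfolding g_def S_def using FF_bound[OF a(1) Q] by (auto simp: abs_le_iff)
  have iS: "FF \<alpha> Q th integrable_on {th - pi..th - pi + 2*pi}"
    using measurable_bounded_by_integrable_imp_integrable[OF meas gi bnd Sl] unfolding S_def by (simp add: algebra_simps)
  have "FF \<alpha> Q th integrable_on {0..0 + 2*pi} \<and> integral {0..0 + 2*pi} (FF \<alpha> Q th) = integral {th - pi..th - pi + 2*pi} (FF \<alpha> Q th)"
    by (rule periodic_shift[of "FF \<alpha> Q th", OF FF_per _ iS]) (use th in auto)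
  thus ?thesis by simp
qed



definition ee :: "real \<Rightarrow> real \<Rightarrow> real \<Rightarrow> real" where
  "ee a Q y = 1 / Bp a Q y + 1 / Bp a Q (- y)"

lemma ee_even: "ee a Q (- y) = ee a Q y"
  by (simp add: ee_def)

lemma base_pos:
  fixes Q y :: real
  assumes "0 < Q" "Q < 1" "\<bar>y\<bar> \<le> 1"
  shows "0 < 1 - 2*Q*y + Q^2"
proof -
  have "Q * y \<le> Q" using assms by (simp add: abs_le_iff mult_left_le)
  moreover have "0 < (1 - Q)^2" using assms by simp
  ultimately show ?thesis by (simp add: power2_eq_square algebra_simps)
qed

lemma deriv_pw:
  fixes Q c y :: real
  assumes "0 < 1 - 2*Q*y + Q^2"
  shows "((\<lambda>y. (1 - 2*Q*y + Q^2) powr c) has_real_derivative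
           (- 2 * Q * c) * (1 - 2*Q*y + Q^2) powr (c - 1)) (at y)"
proof -
  have "((\<lambda>y. (1 - 2*Q*y + Q^2) powr c) has_real_derivative
           (1 - 2*Q*y + Q^2) powr c * (0 * ln (1 - 2*Q*y + Q^2) + (- 2 * Q) * c / (1 - 2*Q*y + Q^2))) (at y)"
    by (rule DERIV_powr) (auto intro!: derivative_eq_intros simp: assms)
  moreover have "(1 - 2*Q*y + Q^2) powr c * (0 * ln (1 - 2*Q*y + Q^2) + (- 2 * Q) * c / (1 - 2*Q*y + Q^2))
      = (- 2 * Q * c) * (1 - 2*Q*y + Q^2) powr (c - 1)"
    using assms by (simp add: powr_diff field_simps)
  ultimately show ?thesis by simp
qed

lemma deriv_pw2:
  fixes Q c y :: real
  assumes "0 < 1 - 2*Q*(-y) + Q^2"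
  shows "((\<lambda>y. (1 - 2*Q*(-y) + Q^2) powr c) has_real_derivative
           (2 * Q * c) * (1 - 2*Q*(-y) + Q^2) powr (c - 1)) (at y)"
proof -
  have "((\<lambda>y. (1 - 2*Q*(-y) + Q^2) powr c) has_real_derivative
           (1 - 2*Q*(-y) + Q^2) powr c * (0 * ln (1 - 2*Q*(-y) + Q^2) + (2 * Q) * c / (1 - 2*Q*(-y) + Q^2))) (at y)"
    by (rule DERIV_powr) (use assms in \<open>auto intro!: derivative_eq_intros\<close>)
  moreover have "(1 - 2*Q*(-y) + Q^2) powr c * (0 * ln (1 - 2*Q*(-y) + Q^2) + (2 * Q) * c / (1 - 2*Q*(-y) + Q^2))
      = (2 * Q * c) * (1 - 2*Q*(-y) + Q^2) powr (c - 1)"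
    using assms by (simp add: powr_diff field_simps)
  ultimately show ?thesis by simp
qed

lemma ee_alt: "ee a Q y = (1 - 2*Q*y + Q^2) powr (- (a/2)) + (1 - 2*Q*(-y) + Q^2) powr (- (a/2))"
  by (simp add: ee_def Bp_def powr_minus_divide)

lemma ee_strict:
  fixes a Q p q :: real
  assumes a: "0 < a" and Q: "0 < Q" "Q < 1" and pq: "0 \<le> p" "p < q" "q \<le> 1"
  shows "ee a Q p < ee a Q q"
proof -
  define f where "f = (\<lambda>y::real. (1 - 2*Q*y + Q^2) powr (- (a/2)) + (1 - 2*Q*(-y) + Q^2) powr (- (a/2)))"
  define f' where "f' = (\<lambda>y::real. (- 2 * Q * (- (a/2))) * (1 - 2*Q*y + Q^2) powr (- (a/2) - 1)
       + (2 * Q * (- (a/2))) * (1 - 2*Q*(-y) + Q^2) powr (- (a/2) - 1))"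
  have der: "DERIV f x :> f' x" if "p \<le> x" "x \<le> q" for x
  proof -
    have x1: "\<bar>x\<bar> \<le> 1" "\<bar>-x\<bar> \<le> 1" using that pq by auto
    note d1 = deriv_pw[OF base_pos[OF Q x1(1)], of "- (a/2)"]
    have x2: "0 < 1 - 2*Q*(-x) + Q^2" using base_pos[OF Q x1(2)] by simp
    note d2 = deriv_pw2[OF x2, of "- (a/2)"]
    have "((\<lambda>y. (1 - 2*Q*y + Q^2) powr (- (a/2)) + (1 - 2*Q*(-y) + Q^2) powr (- (a/2))) has_real_derivative f' x) (at x)"
      unfolding f'_def by (rule DERIV_add[OF d1 d2])
    thus ?thesis unfolding f_def .
  qed
  obtain z where z: "p < z" "z < q" "f q - f p = (q - p) * f' z"
    using MVT2[OF pq(2) der] by blast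
  have L: "0 < 1 - 2*Q*z + Q^2" using base_pos[OF Q, of z] z pq by auto
  have LR: "1 - 2*Q*z + Q^2 < 1 - 2*Q*(-z) + Q^2" using Q z pq by simp
  have "(1 - 2*Q*(-z) + Q^2) powr (- (a/2) - 1) < (1 - 2*Q*z + Q^2) powr (- (a/2) - 1)"
    using a L LR by (intro powr_less_mono2_neg) auto
  hence "0 < f' z" unfolding f'_def using Q a by (simp add: algebra_simps)
  hence "0 < f q - f p" using z by simp
  thus ?thesis unfolding ee_alt f_def by simp
qed

lemma ee_mono:
  fixes a Q p q :: real
  assumes a: "0 < a" and Q: "0 < Q" "Q < 1" and pq: "\<bar>p\<bar> \<le> \<bar>q\<bar>" "\<bar>q\<bar> \<le> 1"
  shows "ee a Q p \<le> ee a Q q"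
proof -
  have "ee a Q \<bar>p\<bar> \<le> ee a Q \<bar>q\<bar>"
    using ee_strict[OF a Q, of "\<bar>p\<bar>" "\<bar>q\<bar>"] pq by (cases "\<bar>p\<bar> = \<bar>q\<bar>") auto
  moreover have "ee a Q \<bar>p\<bar> = ee a Q p" "ee a Q \<bar>q\<bar> = ee a Q q"
    by (auto simp: abs_if ee_even)
  ultimately show ?thesis by simp
qed



definition kk :: "real \<Rightarrow> real \<Rightarrow> real \<Rightarrow> real" where
  "kk a Q s = uu a Q s (s + pi/4) + uu a Q s (s + 5*pi/4)"

definition MM :: "real \<Rightarrow> real \<Rightarrow> real \<Rightarrow> real" where
  "MM a Q s = sin s * (1 / Pp a (cos s) - 1 / Pp a (- cos s))
      * (ee a Q ((cos s - sin s) / sqrt 2) - ee a Q ((cos s + sin s) / sqrt 2))"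

lemma c14: "cos (s + pi/4) = (cos s - sin s) / sqrt 2"
proof -
  have "cos (s + pi/4) = (cos s - sin s) * (sqrt 2 / 2)"
    by (simp add: cos_add cos_45 sin_45 algebra_simps)
  also have "sqrt 2 / 2 = 1 / sqrt 2" by (simp add: field_simps)
  finally show ?thesis by simp
qed

lemma c54: "cos (s + 5*pi/4) = - ((cos s - sin s) / sqrt 2)"
proof -
  have "s + 5*pi/4 = (s + pi/4) + pi" by simp
  hence "cos (s + 5*pi/4) = - cos (s + pi/4)" by (simp only: cos_periodic_pi)
  thus ?thesis by (simp add: c14)
qed

lemma kk_form: "kk a Q s = sin s / Pp a (cos s) * ee a Q ((cos s - sin s) / sqrt 2)"
  unfolding kk_def uu_def ee_def c14 c54 by (simp add: divide_inverse algebra_simps)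

lemma kbar_eq: "kk a Q s + kk a Q (- s) + kk a Q (pi - s) + kk a Q (s + pi) = MM a Q s"
proof -
  have a1: "(cos (- s) - sin (- s)) / sqrt 2 = (cos s + sin s) / sqrt 2" by simp
  have a2: "(cos (pi - s) - sin (pi - s)) / sqrt 2 = - ((cos s + sin s) / sqrt 2)" by (simp add: field_simps)
  have a3: "(cos (s + pi) - sin (s + pi)) / sqrt 2 = - ((cos s - sin s) / sqrt 2)" by (simp add: field_simps)
  have k1: "kk a Q (- s) = - sin s / Pp a (cos s) * ee a Q ((cos s + sin s) / sqrt 2)"
    by (simp only: kk_form a1) simp
  have k2: "kk a Q (pi - s) = sin s / Pp a (- cos s) * ee a Q ((cos s + sin s) / sqrt 2)"
    by (simp only: kk_form a2 ee_even) simp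
  have k3: "kk a Q (s + pi) = - sin s / Pp a (- cos s) * ee a Q ((cos s - sin s) / sqrt 2)"
    by (simp only: kk_form a3 ee_even) simp
  show ?thesis
    unfolding k1 k2 k3 kk_form[of a Q s] MM_def by (simp add: divide_inverse algebra_simps)
qed



lemma sq_args:
  fixes c x :: real
  assumes "c^2 + x^2 = 1"
  shows "((c - x) / sqrt 2)^2 = (1 - 2*c*x)/2" "((c + x) / sqrt 2)^2 = (1 + 2*c*x)/2"
    "\<bar>2*c*x\<bar> \<le> 1"
proof -
  have s2: "(sqrt 2)^2 = (2::real)" by simp
  show "((c - x) / sqrt 2)^2 = (1 - 2*c*x)/2"
    using assms by (simp add: power_divide s2 power2_diff algebra_simps)
  show "((c + x) / sqrt 2)^2 = (1 + 2*c*x)/2"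
    using assms by (simp add: power_divide s2 power2_sum algebra_simps)
  have "0 \<le> (\<bar>c\<bar> - \<bar>x\<bar>)^2" by simp
  hence "2 * \<bar>c\<bar> * \<bar>x\<bar> \<le> c^2 + x^2" by (simp add: power2_diff)
  thus "\<bar>2*c*x\<bar> \<le> 1" using assms by (simp add: abs_mult)
qed

lemma abs_le_of_sq:
  fixes p q :: real
  shows "p^2 \<le> q^2 \<Longrightarrow> \<bar>p\<bar> \<le> \<bar>q\<bar>"
  by (simp add: abs_le_square_iff)

lemma args_bound:
  fixes s :: real
  shows "\<bar>(cos s - sin s) / sqrt 2\<bar> \<le> 1" "\<bar>(cos s + sin s) / sqrt 2\<bar> \<le> 1"
proof -
  have cx: "(cos s)^2 + (sin s)^2 = 1" by simp
  note sq = sq_args[OF cx]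
  have "((cos s - sin s) / sqrt 2)^2 \<le> 1^2" using sq by (simp add: abs_le_iff)
  thus "\<bar>(cos s - sin s) / sqrt 2\<bar> \<le> 1" using abs_le_of_sq by fastforce
  have "((cos s + sin s) / sqrt 2)^2 \<le> 1^2" using sq by (simp add: abs_le_iff)
  thus "\<bar>(cos s + sin s) / sqrt 2\<bar> \<le> 1" using abs_le_of_sq by fastforce
qed

lemma MM_nonpos:
  assumes a: "0 < a" and Q: "0 < Q" "Q < 1"
  shows "MM a Q s \<le> 0"
proof (cases "sin s = 0")
  case True thus ?thesis by (simp add: MM_def)
next
  case False
  define c where "c = cos s"
  define x where "x = sin s"
  have cx: "c^2 + x^2 = 1" unfolding c_def x_def by simp
  have x0: "x \<noteq> 0" using False x_def by simp
  have "0 < x^2" using x0 by simp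
  hence "c^2 < 1" using cx by linarith
  hence c1: "\<bar>c\<bar> < 1" by (simp add: abs_square_less_1)
  have P1: "0 < Pp a c" unfolding Pp_def using c1 by simp
  have P2: "0 < Pp a (- c)" unfolding Pp_def using c1 by simp
  define A where "A = 1 / Pp a c - 1 / Pp a (- c)"
  define E where "E = ee a Q ((c - x) / sqrt 2) - ee a Q ((c + x) / sqrt 2)"
  have MMe: "MM a Q s = x * A * E" unfolding MM_def A_def E_def c_def x_def ..
  have hA: "0 \<le> A * c"
  proof (cases "0 \<le> c")
    case True
    have "Pp a c \<le> Pp a (- c)" unfolding Pp_def using True c1 a by (intro powr_mono2) auto
    hence "1 / Pp a (- c) \<le> 1 / Pp a c" using P1 by (simp add: frac_le)
    thus ?thesis using True unfolding A_def by simp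
  next
    case False
    have "Pp a (- c) \<le> Pp a c" unfolding Pp_def using False c1 a by (intro powr_mono2) auto
    hence "1 / Pp a c \<le> 1 / Pp a (- c)" using P2 by (simp add: frac_le)
    thus ?thesis using False unfolding A_def by (simp add: mult_nonpos_nonpos)
  qed
  note sq = sq_args[OF cx]
  have b1: "\<bar>(c - x) / sqrt 2\<bar> \<le> 1" "\<bar>(c + x) / sqrt 2\<bar> \<le> 1"
    using args_bound[of s] unfolding c_def x_def by auto
  have hE: "E * (c * x) \<le> 0"
  proof (cases "0 \<le> c * x")
    case True
    have "((c - x) / sqrt 2)^2 \<le> ((c + x) / sqrt 2)^2" using sq True by simp
    hence "ee a Q ((c - x) / sqrt 2) \<le> ee a Q ((c + x) / sqrt 2)"
      using ee_mono[OF a Q] abs_le_of_sq b1 by blast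
    hence "E \<le> 0" unfolding E_def by simp
    thus ?thesis using True by (simp add: mult_nonpos_nonneg)
  next
    case False
    have "((c + x) / sqrt 2)^2 \<le> ((c - x) / sqrt 2)^2" using sq False by simp
    hence "ee a Q ((c + x) / sqrt 2) \<le> ee a Q ((c - x) / sqrt 2)"
      using ee_mono[OF a Q] abs_le_of_sq b1 by blast
    hence "0 \<le> E" unfolding E_def by simp
    thus ?thesis using False by (simp add: mult_nonneg_nonpos)
  qed
  show ?thesis
  proof (cases "c = 0")
    case True
    hence "A = 0" unfolding A_def by simp
    thus ?thesis using MMe by simp
  next
    case False
    have "(x * A * E) * c^2 = (A * c) * (E * (c * x))" by (simp add: power2_eq_square algebra_simps)
    also have "\<dots> \<le> 0" using hA hE by (simp add: mult_nonneg_nonpos)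
    finally have "(x * A * E) * c^2 \<le> 0" .
    moreover have "0 < c^2" using False by simp
    ultimately have "x * A * E \<le> 0" by (simp add: mult_le_0_iff)
    thus ?thesis using MMe by simp
  qed
qed



lemma MM_neg:
  assumes a: "0 < a" and Q: "0 < Q" "Q < 1"
  shows "MM a Q (pi/4) < 0"
proof -
  have s2: "sqrt 2 / 2 < 1" by (simp add: real_sqrt_less_iff[of 2 4, simplified] )
  have y1: "(cos (pi/4) - sin (pi/4)) / sqrt 2 = 0" by (simp add: cos_45 sin_45)
  have y2: "(cos (pi/4) + sin (pi/4)) / sqrt 2 = 1" by (simp add: cos_45 sin_45)
  have E: "ee a Q 0 < ee a Q 1" using ee_strict[OF a Q, of 0 1] by simp
  have c: "cos (pi/4) = sqrt 2 / 2" by (simp add: cos_45)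
  have P1: "0 < Pp a (sqrt 2 / 2)" unfolding Pp_def using s2 by simp
  have "Pp a (sqrt 2 / 2) < Pp a (- (sqrt 2 / 2))" unfolding Pp_def using a s2
    by (intro powr_less_mono2) auto
  hence A: "0 < 1 / Pp a (sqrt 2 / 2) - 1 / Pp a (- (sqrt 2 / 2))" using P1 by (simp add: frac_less2)
  have x: "0 < sin (pi/4)" by (simp add: sin_45)
  have "MM a Q (pi/4) = sin (pi/4) * (1 / Pp a (sqrt 2 / 2) - 1 / Pp a (- (sqrt 2 / 2))) * (ee a Q 0 - ee a Q 1)"
    unfolding MM_def y1 y2 by (simp only: c)
  also have "\<dots> < 0" using x A E by (simp add: mult_pos_neg)
  finally show ?thesis .
qed

lemma MM_cont:
  assumes a: "0 < a" and Q: "0 < Q" "Q < 1"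
  shows "continuous_on {pi/8..3*pi/8} (MM a Q)"
proof -
  define S where "S = {pi/8..3*pi/8}"
  have cpos: "0 < cos s" if "s \<in> S" for s
  proof -
    have "pi/8 \<le> s" "s \<le> 3*pi/8" using that unfolding S_def by auto
    thus ?thesis using pi_gt_zero by (intro cos_gt_zero_pi) linarith+
  qed
  have clt: "cos s < 1" if "s \<in> S" for s
  proof -
    have "pi/8 \<le> s" "s \<le> 3*pi/8" using that unfolding S_def by auto
    hence "cos s < cos 0" using pi_gt_zero by (intro cos_monotone_0_pi) linarith+
    thus ?thesis by simp
  qed
  have bp: "0 < 1 - 2*Q*y + Q^2" if "\<bar>y\<bar> \<le> 1" for y using base_pos[OF Q that] .
  have B1: "0 < 1 - 2*Q*((cos s - sin s) / sqrt 2) + Q^2" for s using bp args_bound by blast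
  have B2: "0 < 1 - 2*Q*((cos s + sin s) / sqrt 2) + Q^2" for s using bp args_bound by blast
  have B3: "0 < 1 - 2*Q*(- ((cos s - sin s) / sqrt 2)) + Q^2" for s using bp args_bound
    by (metis abs_minus_cancel)
  have B4: "0 < 1 - 2*Q*(- ((cos s + sin s) / sqrt 2)) + Q^2" for s using bp args_bound
    by (metis abs_minus_cancel)
  have n1: "\<forall>x\<in>S. 2 - 2 * cos x \<noteq> 0" using clt by force
  have n2: "\<forall>x\<in>S. 2 - 2 * - cos x \<noteq> 0" using cpos by force
  have n3: "\<forall>x. 1 - 2 * Q * ((cos x - sin x) / sqrt 2) + Q\<^sup>2 \<noteq> 0" using B1 by (metis less_irrefl)
  have n4: "\<forall>x. 1 - 2 * Q * ((cos x + sin x) / sqrt 2) + Q\<^sup>2 \<noteq> 0" using B2 by (metis less_irrefl)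
  have n5: "\<forall>x. 1 - 2 * Q * - ((cos x - sin x) / sqrt 2) + Q\<^sup>2 \<noteq> 0" using B3 by (metis less_irrefl)
  have n6: "\<forall>x. 1 - 2 * Q * - ((cos x + sin x) / sqrt 2) + Q\<^sup>2 \<noteq> 0" using B4 by (metis less_irrefl)
  have "continuous_on S (MM a Q)"
    unfolding MM_def ee_def Pp_def Bp_def
    by (intro continuous_intros) (use n1 n2 n3 n4 n5 n6 in \<open>simp_all add: powr_eq_0_iff\<close>)
  thus ?thesis unfolding S_def .
qed

lemma neg_integral:
  fixes f :: "real \<Rightarrow> real"
  assumes int: "f integrable_on {a..b}" and cd: "a \<le> c" "c < d" "d \<le> b"
    and np: "\<And>x. f x \<le> 0" and cont: "continuous_on {c..d} f"
    and x0: "c \<le> x0" "x0 \<le> d" "f x0 < 0"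
  shows "integral {a..b} f < 0"
proof -
  have ic: "f integrable_on {a..c}" "f integrable_on {c..b}" "f integrable_on {c..d}" "f integrable_on {d..b}"
    using int cd by (auto intro: integrable_on_subinterval)
  have s1: "integral {a..c} f + integral {c..b} f = integral {a..b} f"
    using cd int by (intro Henstock_Kurzweil_Integration.integral_combine) auto
  have s2: "integral {c..d} f + integral {d..b} f = integral {c..b} f"
    using cd ic by (intro Henstock_Kurzweil_Integration.integral_combine) auto
  have n1: "integral {a..c} f \<le> 0" using integral_le[OF ic(1) integrable_0] np by simp
  have n2: "integral {d..b} f \<le> 0" using integral_le[OF ic(4) integrable_0] np by simp
  have n3: "integral {c..d} f \<le> 0" using integral_le[OF ic(3) integrable_0] np by simp
  have n4: "integral {c..d} f \<noteq> 0"
  proof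
    assume z: "integral {c..d} f = 0"
    have "((\<lambda>x. - f x) has_integral 0) (cbox c d)"
      using has_integral_neg[OF integrable_integral[OF ic(3)]] z by simp
    hence "- f x0 = 0"
      using cd x0 np by (intro has_integral_0_cbox_imp_0[of c d "\<lambda>x. - f x"]) (auto intro!: continuous_intros cont)
    thus False using x0 by simp
  qed
  show ?thesis using s1 s2 n1 n2 n3 n4 by linarith
qed



lemma uu_per: "uu a Q (s + 2*pi) (v + 2*pi) = uu a Q s v"
  by (simp add: uu_def)

lemma C_alpha_pos:
  assumes "0 < \<alpha>" "\<alpha> < 1"
  shows "0 < C_alpha \<alpha>"
  unfolding C_alpha_def using assms by (intro divide_pos_pos mult_pos_pos Gamma_real_pos) auto

lemma Gth:
  assumes a: "0 < \<alpha>" "\<alpha> < 1" and Q: "0 < Q" "Q < 1" and th: "0 \<le> th" "th \<le> pi"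
  shows "(\<lambda>t. uu \<alpha> Q (t - th) (t + th)) integrable_on {0..2*pi} \<and>
    G \<alpha> \<Omega> (\<lambda>z. z + complex_of_real Q / z) (cis th)
      = - 2 * Q * \<Omega> * sin (2*th) - C_alpha \<alpha> * ((1 - Q^2) / (2*pi) * integral {0..2*pi} (\<lambda>t. uu \<alpha> Q (t - th) (t + th)))"
proof -
  define K where "K = (1 - Q^2) / (2*pi)"
  have "Q*Q < 1*1" using Q by (intro mult_strict_mono) auto
  hence K: "K \<noteq> 0" unfolding K_def by (simp add: power2_eq_square)
  have i1: "(\<lambda>t. FF \<alpha> Q th t * Yc Q th) integrable_on {0..2*pi}"
    by (rule integrable_on_mult_left[OF FF_integrable[OF a Q th]])
  have e: "(\<lambda>t. Im (FF \<alpha> Q th t * Yc Q th)) = (\<lambda>t. K * uu \<alpha> Q (t - th) (t + th))"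
    unfolding Im_FF K_def ..
  have i2: "(\<lambda>t. K * uu \<alpha> Q (t - th) (t + th)) integrable_on {0..2*pi}"
    using Im_integrable[OF i1] unfolding e .
  have i3: "(\<lambda>t. uu \<alpha> Q (t - th) (t + th)) integrable_on {0..2*pi}"
    using integrable_on_mult_right[OF i2, of "1/K"] K by simp
  have "Im (integral {0..2*pi} (\<lambda>t. FF \<alpha> Q th t * Yc Q th)) = K * integral {0..2*pi} (\<lambda>t. uu \<alpha> Q (t - th) (t + th))"
    unfolding Im_integral[OF i1] e by simp
  thus ?thesis using i3 unfolding G_formula K_def by simp
qed

lemma Ushift:
  assumes th: "\<bar>th\<bar> \<le> 2*pi" and int: "(\<lambda>t. uu \<alpha> Q (t - th) (t + th)) integrable_on {0..2*pi}"
  shows "(\<lambda>s. uu \<alpha> Q s (s + 2*th)) integrable_on {0..2*pi} \<and>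
    integral {0..2*pi} (\<lambda>s. uu \<alpha> Q s (s + 2*th)) = integral {0..2*pi} (\<lambda>t. uu \<alpha> Q (t - th) (t + th))"
proof -
  define h where "h = (\<lambda>t. uu \<alpha> Q (t - th) (t + th))"
  have per: "h (x + 2*pi) = h x" for x
  proof -
    have "h (x + 2*pi) = uu \<alpha> Q ((x - th) + 2*pi) ((x + th) + 2*pi)" unfolding h_def by (simp add: algebra_simps)
    thus ?thesis unfolding uu_per h_def .
  qed
  have eq: "(\<lambda>x. h (x + th)) = (\<lambda>s. uu \<alpha> Q s (s + 2*th))" unfolding h_def by (rule ext) (simp add: algebra_simps)
  have r: "(\<lambda>x. h (x + th)) integrable_on {0..2*pi} \<and> integral {0..2*pi} (\<lambda>x. h (x + th)) = integral {0..2*pi} h"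
    by (rule periodic_shift0[of h th, OF per th]) (use int in \<open>simp add: h_def\<close>)
  show ?thesis using r unfolding eq by (simp add: h_def)
qed

lemma kk_per: "kk a Q (s + 2*pi) = kk a Q s"
proof -
  have "s + 2*pi + pi/4 = (s + pi/4) + 2*pi" "s + 2*pi + 5*pi/4 = (s + 5*pi/4) + 2*pi" by simp_all
  thus ?thesis unfolding kk_def by (simp only: uu_per)
qed

lemma part2:
  assumes a: "0 < \<alpha>" "\<alpha> < 1" and Q: "0 < Q" "Q < 1"
    and allG: "\<forall>w. cmod w = 1 \<longrightarrow> G \<alpha> \<Omega> (\<lambda>z. z + complex_of_real Q / z) w = 0"
  shows False
proof -
  define R1 where "R1 = integral {0..2*pi} (\<lambda>s. uu \<alpha> Q s (s + pi/4))"
  define R2 where "R2 = integral {0..2*pi} (\<lambda>s. uu \<alpha> Q s (s + 5*pi/4))"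
  define C where "C = C_alpha \<alpha>"
  define K where "K = (1 - Q^2) / (2*pi)"
  have Cp: "0 < C" unfolding C_def using C_alpha_pos[OF a] .
  have "Q*Q < 1*1" using Q by (intro mult_strict_mono) auto
  hence Kp: "0 < K" unfolding K_def by (simp add: power2_eq_square)
  have g1: "(\<lambda>t. uu \<alpha> Q (t - pi/8) (t + pi/8)) integrable_on {0..2*pi}"
    "G \<alpha> \<Omega> (\<lambda>z. z + complex_of_real Q / z) (cis (pi/8))
      = - 2 * Q * \<Omega> * sin (2*(pi/8)) - C * (K * integral {0..2*pi} (\<lambda>t. uu \<alpha> Q (t - pi/8) (t + pi/8)))"
    using Gth[OF a Q, of "pi/8" \<Omega>] unfolding C_def K_def by auto
  have g2: "(\<lambda>t. uu \<alpha> Q (t - 5*pi/8) (t + 5*pi/8)) integrable_on {0..2*pi}"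
    "G \<alpha> \<Omega> (\<lambda>z. z + complex_of_real Q / z) (cis (5*pi/8))
      = - 2 * Q * \<Omega> * sin (2*(5*pi/8)) - C * (K * integral {0..2*pi} (\<lambda>t. uu \<alpha> Q (t - 5*pi/8) (t + 5*pi/8)))"
    using Gth[OF a Q, of "5*pi/8" \<Omega>] unfolding C_def K_def by auto
  have u1: "(\<lambda>s. uu \<alpha> Q s (s + 2*(pi/8))) integrable_on {0..2*pi} \<and>
    integral {0..2*pi} (\<lambda>s. uu \<alpha> Q s (s + 2*(pi/8))) = integral {0..2*pi} (\<lambda>t. uu \<alpha> Q (t - pi/8) (t + pi/8))"
    by (rule Ushift[OF _ g1(1)]) simp
  have u2: "(\<lambda>s. uu \<alpha> Q s (s + 2*(5*pi/8))) integrable_on {0..2*pi} \<and>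
    integral {0..2*pi} (\<lambda>s. uu \<alpha> Q s (s + 2*(5*pi/8))) = integral {0..2*pi} (\<lambda>t. uu \<alpha> Q (t - 5*pi/8) (t + 5*pi/8))"
    by (rule Ushift[OF _ g2(1)]) simp
  have t1: "2*(pi/8) = pi/4" "2*(5*pi/8) = 5*pi/4" by simp_all
  have ik1: "(\<lambda>s. uu \<alpha> Q s (s + pi/4)) integrable_on {0..2*pi}" using u1 unfolding t1 by simp
  have ik2: "(\<lambda>s. uu \<alpha> Q s (s + 5*pi/4)) integrable_on {0..2*pi}" using u2 unfolding t1 by simp
  have G1: "0 = - 2 * Q * \<Omega> * sin (pi/4) - C * (K * R1)"
    using g1(2) u1 allG unfolding R1_def t1 by simp
  have sin54: "sin (5*pi/4) = - sin (pi/4)"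
  proof -
    have "5*pi/4 = pi/4 + pi" by simp
    thus ?thesis by (simp only: sin_periodic_pi)
  qed
  have G2: "0 = 2 * Q * \<Omega> * sin (pi/4) - C * (K * R2)"
    using g2(2) u2 allG unfolding R2_def t1 sin54 by simp
  have "C * K * (R1 + R2) = 0" using G1 G2 by (simp add: algebra_simps)
  hence R0: "R1 + R2 = 0" using Cp Kp by simp
  have ikk: "kk \<alpha> Q integrable_on {0..2*pi}"
    unfolding kk_def[abs_def] by (rule integrable_add[OF ik1 ik2])
  have Ikk: "integral {0..2*pi} (kk \<alpha> Q) = 0"
    unfolding kk_def[abs_def] using R0 unfolding R1_def R2_def by (simp add: integral_add[OF ik1 ik2])
  have per: "\<And>x. kk \<alpha> Q (x + 2*pi) = kk \<alpha> Q x" by (rule kk_per)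
  note r1 = periodic_reflect0[of "kk \<alpha> Q", OF per ikk]
  note r2 = periodic_shift0[of "kk \<alpha> Q" pi, OF per _ ikk]
  have per2: "\<And>x. kk \<alpha> Q (- (x + 2*pi)) = kk \<alpha> Q (- x)"
  proof -
    fix x
    have "kk \<alpha> Q (- (x + 2*pi) + 2*pi) = kk \<alpha> Q (- (x + 2*pi))" by (rule kk_per)
    thus "kk \<alpha> Q (- (x + 2*pi)) = kk \<alpha> Q (- x)" by simp
  qed
  note r3 = periodic_shift0[of "\<lambda>x. kk \<alpha> Q (- x)" "- pi", OF per2 _ conjunct1[OF r1]]
  have e3: "(\<lambda>x. kk \<alpha> Q (- (x + - pi))) = (\<lambda>x. kk \<alpha> Q (pi - x))" by (rule ext) (simp add: algebra_simps)
  have j1: "(\<lambda>x. kk \<alpha> Q (- x)) integrable_on {0..2*pi}" "integral {0..2*pi} (\<lambda>x. kk \<alpha> Q (- x)) = 0"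
    using r1 Ikk by auto
  have j2: "(\<lambda>x. kk \<alpha> Q (x + pi)) integrable_on {0..2*pi}" "integral {0..2*pi} (\<lambda>x. kk \<alpha> Q (x + pi)) = 0"
    using r2 Ikk by auto
  have j3: "(\<lambda>x. kk \<alpha> Q (pi - x)) integrable_on {0..2*pi}" "integral {0..2*pi} (\<lambda>x. kk \<alpha> Q (pi - x)) = 0"
    using r3 j1 unfolding e3 by auto
  have sum_i: "(\<lambda>s. kk \<alpha> Q s + kk \<alpha> Q (- s) + kk \<alpha> Q (pi - s) + kk \<alpha> Q (s + pi)) integrable_on {0..2*pi}"
    by (intro integrable_add ikk j1(1) j2(1) j3(1))
  have sum_I: "integral {0..2*pi} (\<lambda>s. kk \<alpha> Q s + kk \<alpha> Q (- s) + kk \<alpha> Q (pi - s) + kk \<alpha> Q (s + pi)) = 0"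
    using Ikk j1 j2 j3 ikk
    by (simp add: integral_add integrable_add)
  have MMf: "(\<lambda>s. kk \<alpha> Q s + kk \<alpha> Q (- s) + kk \<alpha> Q (pi - s) + kk \<alpha> Q (s + pi)) = MM \<alpha> Q"
    by (rule ext) (rule kbar_eq)
  have iM: "MM \<alpha> Q integrable_on {0..2*pi}" using sum_i unfolding MMf .
  have IM: "integral {0..2*pi} (MM \<alpha> Q) = 0" using sum_I unfolding MMf .
  have "integral {0..2*pi} (MM \<alpha> Q) < 0"
    by (rule neg_integral[OF iM, of "pi/8" "3*pi/8" "pi/4"])
       (use MM_nonpos[OF a(1) Q] MM_cont[OF a(1) Q] MM_neg[OF a(1) Q] pi_gt_zero in auto)
  thus False using IM by simp
qed


theorem proposition5p1:
  fixes \<alpha> :: real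
  assumes "0 < \<alpha>" and "\<alpha> < 1"
  shows "(\<forall>\<Omega>::real. \<forall>w::complex. cmod w = 1 \<longrightarrow> G \<alpha> \<Omega> id w = 0)
       \<and> (\<forall>Q::real. 0 < Q \<and> Q < 1 \<longrightarrow>
            \<not> (\<exists>\<Omega>::real. \<forall>w::complex. cmod w = 1 \<longrightarrow>
                   G \<alpha> \<Omega> (\<lambda>z. z + of_real Q / z) w = 0))"
proof
  show "\<forall>\<Omega>::real. \<forall>w::complex. cmod w = 1 \<longrightarrow> G \<alpha> \<Omega> id w = 0"
    using part1 by blast
  show "\<forall>Q::real. 0 < Q \<and> Q < 1 \<longrightarrow>
            \<not> (\<exists>\<Omega>::real. \<forall>w::complex. cmod w = 1 \<longrightarrow>
                   G \<alpha> \<Omega> (\<lambda>z. z + of_real Q / z) w = 0)"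
    using part2[OF assms] by blast
qed

end
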